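(* For all positive integers $n,m,L$ with $L\le m$ and all $M\in[0,m)$, \[ \frac{R^{\rm LC}(M,L)}{R^{\rm lb}(M,L)}\le 18, \] where \[ R^{\rm lb}(M,L)=\max\left\{\max_{s\in\{1,\dots,\min\{\lfloor m/L\rfloor,\,n\}\}}\left(Ls-\frac{sM}{\left\lfloor \lfloor m/L\rfloor / s\right\rfloor}\right),\ \frac{m-M}{\lceil m/L\rceil}\right\}. \]
   Context: Setting: server with library of $m$ files of $B$ bits each, $n$ users each with a cache of $M$ files, each user requesting $L$ distinct files; $\mathbf F$ is the $L\times n$ request matrix. For $M$ such that $t=nM/m$ is an integer, each file is split into $\binom nt$ packets $W_{f,\mathcal T}$ indexed by $t$-subsets $\mathcal T$ of users, and user $u$ caches the packets with $u\in\mathcal T$. The directed conflict graph $\mathcal H^d_{\mathbf F}$ has one vertex for each pair (packet $(f,\mathcal T)$, user $u$) with $f$ requested by $u$ and $u\notin\mathcal T$, and a directed edge from vertex $v_2$ to $v_1$ iff their packets differ and the packet of $v_1$ is not cached by the user of $v_2$. The directed local chromatic number $\chi_l(\mathcal H^d)$ is the minimum over proper colorings $c$ of the underlying undirected graph of $\max_v$ (number of distinct colors on the closed out-neighborhood of $v$, i.e. $v$ and its out-neighbors). For integer $t$, $R^{\rm LC}(M,L)=\max_{\mathbf F}\chi_l(\mathcal H^d_{\mathbf F})/\binom nt$ (in file units); for other $M\in[0,m]$, $R^{\rm LC}(M,L)$ is the rate obtained by memory sharing, i.e. the lower convex envelope in $M$ of the values at the points $M=tm/n$, $t=0,1,\dots,n$.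 *)

theory Defs
  imports Complex_Main
begin

text \<open>Users are 0..<n, files are 0..<m. A request matrix F is an L x n matrix,
  F i u being the i-th file requested by user u (i < L, u < n).\<close>

type_synonym packet = "nat \<times> nat set"      (* (file f, user subset T) *)
type_synonym vertex = "packet \<times> nat"       (* (packet, requesting user u) *)

definition valid_request :: "nat \<Rightarrow> nat \<Rightarrow> nat \<Rightarrow> (nat \<Rightarrow> nat \<Rightarrow> nat) \<Rightarrow> bool" where
  "valid_request n m L F \<longleftrightarrow>
     (\<forall>u<n. \<forall>i<L. F i u < m) \<and>
     (\<forall>u<n. inj_on (\<lambda>i. F i u) {..<L}) \<and>
     (\<forall>i u. (L \<le> i \<or> n \<le> u) \<longrightarrow> F i u = 0)"

definition conflict_vertices :: "nat \<Rightarrow> nat \<Rightarrow> nat \<Rightarrow> (nat \<Rightarrow> nat \<Rightarrow> nat) \<Rightarrow> vertex set" where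
  "conflict_vertices n L t F =
     {((f, T), u). u < n \<and> (\<exists>i<L. F i u = f) \<and> T \<subseteq> {..<n} \<and> card T = t \<and> u \<notin> T}"

text \<open>Directed edge from v2 to v1: packets differ and the packet of v1 is not
  cached by the user of v2.\<close>
definition conflict_arc :: "vertex \<Rightarrow> vertex \<Rightarrow> bool" where
  "conflict_arc v2 v1 \<longleftrightarrow> fst v2 \<noteq> fst v1 \<and> snd v2 \<notin> snd (fst v1)"

definition dir_local_chromatic :: "vertex set \<Rightarrow> (vertex \<Rightarrow> vertex \<Rightarrow> bool) \<Rightarrow> nat" where
  "dir_local_chromatic V A =
     (LEAST k. \<exists>c :: vertex \<Rightarrow> nat.
        (\<forall>v1\<in>V. \<forall>v2\<in>V. (A v1 v2 \<or> A v2 v1) \<longrightarrow> c v1 \<noteq> c v2) \<and>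
        (\<forall>v\<in>V. card (c ` ({v} \<union> {w\<in>V. A v w})) \<le> k))"

definition chi_LC :: "nat \<Rightarrow> nat \<Rightarrow> nat \<Rightarrow> (nat \<Rightarrow> nat \<Rightarrow> nat) \<Rightarrow> nat" where
  "chi_LC n L t F = dir_local_chromatic (conflict_vertices n L t F) conflict_arc"

text \<open>R^LC at the point M = t m / n (in file units).\<close>
definition RLC_point :: "nat \<Rightarrow> nat \<Rightarrow> nat \<Rightarrow> nat \<Rightarrow> real" where
  "RLC_point n m L t =
     real (Max {chi_LC n L t F | F. valid_request n m L F}) / real (n choose t)"

text \<open>R^LC(M,L) for M in [0,m]: the point value when t = nM/m is an integer,
  otherwise the lower convex envelope (memory sharing) of the points
  (t m / n, RLC_point t), t = 0..n.\<close>
definition RLC :: "nat \<Rightarrow> nat \<Rightarrow> nat \<Rightarrow> real \<Rightarrow> real" where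
  "RLC n m L M =
     (if \<exists>t\<le>n. M = real t * real m / real n
      then RLC_point n m L (THE t. t \<le> n \<and> M = real t * real m / real n)
      else Inf {(\<Sum>t\<le>n. w t * RLC_point n m L t) | w.
                  (\<forall>t\<le>n. 0 \<le> w t) \<and> (\<Sum>t\<le>n. w t) = 1 \<and>
                  (\<Sum>t\<le>n. w t * (real t * real m / real n)) = M})"

text \<open>The lower bound R^lb(M,L). Floors of ratios of naturals are nat div.\<close>
definition Rlb :: "nat \<Rightarrow> nat \<Rightarrow> nat \<Rightarrow> real \<Rightarrow> real" where
  "Rlb n m L M =
     max (Max ((\<lambda>s. real L * real s - real s * M / real ((m div L) div s))
                 ` {1..min (m div L) n}))
         ((real m - M) / real_of_int \<lceil>real m / real L\<rceil>)"

end

theory Submission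
  imports Defs
begin



lemma dlc_le:
  fixes c :: "vertex \<Rightarrow> nat"
  assumes "\<forall>v1\<in>V. \<forall>v2\<in>V. (A v1 v2 \<or> A v2 v1) \<longrightarrow> c v1 \<noteq> c v2"
    and "\<forall>v\<in>V. card (c ` ({v} \<union> {w\<in>V. A v w})) \<le> k"
  shows "dir_local_chromatic V A \<le> k"
proof -
  have h: "\<exists>c::vertex\<Rightarrow>nat. (\<forall>v1\<in>V. \<forall>v2\<in>V. (A v1 v2 \<or> A v2 v1) \<longrightarrow> c v1 \<noteq> c v2) \<and>
        (\<forall>v\<in>V. card (c ` ({v} \<union> {w\<in>V. A v w})) \<le> k)"
    by (rule exI[of _ c]) (use assms in simp)
  show ?thesis unfolding dir_local_chromatic_def
    by (rule Least_le[of "\<lambda>k. \<exists>c::vertex\<Rightarrow>nat. (\<forall>v1\<in>V. \<forall>v2\<in>V. (A v1 v2 \<or> A v2 v1) \<longrightarrow> c v1 \<noteq> c v2) \<and>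
        (\<forall>v\<in>V. card (c ` ({v} \<union> {w\<in>V. A v w})) \<le> k)", OF h])
qed

lemma finite_Vfin: "finite (conflict_vertices n L t F)"
proof -
  have "conflict_vertices n L t F \<subseteq> (((\<lambda>i. F (fst i) (snd i)) ` ({..<L} \<times> {..<n})) \<times> Pow {..<n}) \<times> {..<n}"
    unfolding conflict_vertices_def by (force simp: image_iff Bex_def)
  thus ?thesis by (rule finite_subset) auto
qed

lemma chi_uncoded:
  assumes vr: "valid_request n m L F" and n: "0 < n"
  shows "chi_LC n L t F \<le> m * ((n - 1) choose t)"
proof -
  let ?P = "{..<m} \<times> {T. T \<subseteq> {..<n} \<and> card T = t}"
  have fP: "finite ?P" by auto
  obtain g where g: "bij_betw g ?P {0..<card ?P}" using ex_bij_betw_finite_nat[OF fP] by blast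
  hence ginj: "inj_on g ?P" by (rule bij_betw_imp_inj_on)
  let ?V = "conflict_vertices n L t F"
  have inP: "fst v \<in> ?P" if "v \<in> ?V" for v
    using that vr unfolding conflict_vertices_def valid_request_def by auto
  show ?thesis unfolding chi_LC_def
  proof (rule dlc_le[where c = "\<lambda>v. g (fst v)"])
    show "\<forall>v1\<in>?V. \<forall>v2\<in>?V. (conflict_arc v1 v2 \<or> conflict_arc v2 v1) \<longrightarrow> g (fst v1) \<noteq> g (fst v2)"
    proof (intro ballI impI)
      fix v1 v2 assume a: "v1 \<in> ?V" "v2 \<in> ?V" "conflict_arc v1 v2 \<or> conflict_arc v2 v1"
      have "fst v1 \<noteq> fst v2" using a(3) unfolding conflict_arc_def by auto
      thus "g (fst v1) \<noteq> g (fst v2)" using inj_onD[OF ginj _ inP[OF a(1)] inP[OF a(2)]] by blast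
    qed
    show "\<forall>v\<in>?V. card ((\<lambda>v. g (fst v)) ` ({v} \<union> {w\<in>?V. conflict_arc v w})) \<le> m * ((n - 1) choose t)"
    proof
      fix v assume v: "v \<in> ?V"
      let ?Q = "{..<m} \<times> {T. T \<subseteq> {..<n} - {snd v} \<and> card T = t}"
      have vu: "snd v \<notin> snd (fst v)" using v unfolding conflict_vertices_def by auto
      have sub: "fst ` ({v} \<union> {w\<in>?V. conflict_arc v w}) \<subseteq> ?Q"
      proof
        fix p assume "p \<in> fst ` ({v} \<union> {w\<in>?V. conflict_arc v w})"
        then obtain w where w0: "w \<in> {v} \<union> {w\<in>?V. conflict_arc v w}" and p: "p = fst w" by blast
        have w: "w \<in> ?V" "w = v \<or> conflict_arc v w" using w0 v by auto
        have "snd v \<notin> snd (fst w)" using w(2) vu unfolding conflict_arc_def by auto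
        thus "p \<in> ?Q" using inP[OF w(1)] p by auto
      qed
      have "card ((\<lambda>v. g (fst v)) ` ({v} \<union> {w\<in>?V. conflict_arc v w}))
          = card (g ` fst ` ({v} \<union> {w\<in>?V. conflict_arc v w}))" by (simp add: image_image)
      also have "\<dots> \<le> card (fst ` ({v} \<union> {w\<in>?V. conflict_arc v w}))"
        by (rule card_image_le) (use finite_Vfin in auto)
      also have "\<dots> \<le> card ?Q" by (rule card_mono) (use sub in auto)
      also have "card ?Q = m * ((n - 1) choose t)"
      proof -
        have "snd v < n" using v unfolding conflict_vertices_def by auto
        hence "card ({..<n} - {snd v}) = n - 1" by simp
        thus ?thesis by (simp add: card_cartesian_product n_subsets)
      qed
      finally show "card ((\<lambda>v. g (fst v)) ` ({v} \<union> {w\<in>?V. conflict_arc v w})) \<le> m * ((n - 1) choose t)" .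
    qed
  qed
qed




lemma chi_MAN:
  assumes vr: "valid_request n m L F"
  shows "chi_LC n L t F \<le> L * (n choose Suc t)"
proof -
  let ?K = "{S. S \<subseteq> {..<n} \<and> card S = Suc t} \<times> {..<L}"
  have fK: "finite ?K" by auto
  obtain g where g: "bij_betw g ?K {0..<card ?K}" using ex_bij_betw_finite_nat[OF fK] by blast
  hence ginj: "inj_on g ?K" by (rule bij_betw_imp_inj_on)
  let ?V = "conflict_vertices n L t F"
  define idx where "idx v = (LEAST i. i < L \<and> F i (snd v) = fst (fst v))" for v :: vertex
  define key where "key v = (snd (fst v) \<union> {snd v}, idx v)" for v :: vertex
  have idx: "idx v < L \<and> F (idx v) (snd v) = fst (fst v)" if "v \<in> ?V" for v
  proof -
    from that obtain i where "i < L \<and> F i (snd v) = fst (fst v)"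
      unfolding conflict_vertices_def by auto
    thus ?thesis unfolding idx_def by (rule LeastI)
  qed
  have inK: "key v \<in> ?K" if v: "v \<in> ?V" for v
  proof -
    obtain f T u where vv: "v = ((f, T), u)" by (metis prod.collapse)
    have "T \<subseteq> {..<n}" "card T = t" "u \<notin> T" "u < n"
      using v unfolding vv conflict_vertices_def by auto
    moreover have "finite T" using \<open>T \<subseteq> {..<n}\<close> finite_subset by blast
    ultimately show ?thesis using idx[OF v] unfolding key_def vv by auto
  qed
  have proper: "\<not> conflict_arc v1 v2" if v1: "v1 \<in> ?V" and v2: "v2 \<in> ?V" and k: "key v1 = key v2" for v1 v2
  proof -
    obtain f1 T1 u1 where vv1: "v1 = ((f1, T1), u1)" by (metis prod.collapse)
    obtain f2 T2 u2 where vv2: "v2 = ((f2, T2), u2)" by (metis prod.collapse)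
    have n1: "u1 \<notin> T1" and n2: "u2 \<notin> T2" using v1 v2 unfolding vv1 vv2 conflict_vertices_def by auto
    have e1: "T1 \<union> {u1} = T2 \<union> {u2}" and e2: "idx v1 = idx v2" using k unfolding key_def vv1 vv2 by auto
    show ?thesis
    proof (cases "u1 = u2")
      case True
      have "T1 = T2" using e1 n1 n2 True by blast
      moreover have "f1 = f2" using idx[OF v1] idx[OF v2] e2 True unfolding vv1 vv2 by auto
      ultimately show ?thesis unfolding conflict_arc_def vv1 vv2 by auto
    next
      case False
      hence "u1 \<in> T2" using e1 by blast
      thus ?thesis unfolding conflict_arc_def vv1 vv2 by auto
    qed
  qed
  show ?thesis unfolding chi_LC_def
  proof (rule dlc_le[where c = "\<lambda>v. g (key v)"])
    show "\<forall>v1\<in>?V. \<forall>v2\<in>?V. (conflict_arc v1 v2 \<or> conflict_arc v2 v1) \<longrightarrow> g (key v1) \<noteq> g (key v2)"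
    proof (intro ballI impI)
      fix v1 v2 assume a: "v1 \<in> ?V" "v2 \<in> ?V" "conflict_arc v1 v2 \<or> conflict_arc v2 v1"
      show "g (key v1) \<noteq> g (key v2)"
      proof
        assume "g (key v1) = g (key v2)"
        hence "key v1 = key v2" using ginj inK a(1,2) unfolding inj_on_def by blast
        thus False using proper a by metis
      qed
    qed
    show "\<forall>v\<in>?V. card ((\<lambda>v. g (key v)) ` ({v} \<union> {w\<in>?V. conflict_arc v w})) \<le> L * (n choose Suc t)"
    proof
      fix v assume v: "v \<in> ?V"
      have sub: "key ` ({v} \<union> {w\<in>?V. conflict_arc v w}) \<subseteq> ?K"
      proof (rule image_subsetI)
        fix w assume "w \<in> {v} \<union> {w\<in>?V. conflict_arc v w}"
        hence "w \<in> ?V" using v by blast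
        thus "key w \<in> ?K" by (rule inK)
      qed
      have "card ((\<lambda>v. g (key v)) ` ({v} \<union> {w\<in>?V. conflict_arc v w}))
          = card (g ` key ` ({v} \<union> {w\<in>?V. conflict_arc v w}))" by (simp add: image_image)
      also have "\<dots> \<le> card (key ` ({v} \<union> {w\<in>?V. conflict_arc v w}))"
        by (rule card_image_le) (use finite_Vfin in auto)
      also have "\<dots> \<le> card ?K" by (rule card_mono[OF fK sub])
      also have "card ?K = L * (n choose Suc t)"
        by (simp add: card_cartesian_product n_subsets)
      finally show "card ((\<lambda>v. g (key v)) ` ({v} \<union> {w\<in>?V. conflict_arc v w})) \<le> L * (n choose Suc t)" .
    qed
  qed
qed




lemma valid_exists: assumes "L \<le> m" shows "valid_request n m L (\<lambda>i u. if i < L \<and> u < n then i else 0)"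
  using assms unfolding valid_request_def by (auto simp: inj_on_def)

lemma point_le:
  assumes "\<And>F. valid_request n m L F \<Longrightarrow> chi_LC n L t F \<le> B" and "L \<le> m"
  shows "RLC_point n m L t \<le> real B / real (n choose t)"
proof -
  let ?S = "{chi_LC n L t F | F. valid_request n m L F}"
  have sub: "?S \<subseteq> {..B}" using assms(1) by auto
  hence fin: "finite ?S" by (rule finite_subset) auto
  have ne: "?S \<noteq> {}" using valid_exists[OF assms(2)] by blast
  have "Max ?S \<le> B" using fin ne sub by (simp add: Max_le_iff subset_iff)
  thus ?thesis unfolding RLC_point_def by (simp add: divide_right_mono)
qed

lemma P_nonneg: "0 \<le> RLC_point n m L t"
  unfolding RLC_point_def by simp

lemma P_unc:
  assumes "0 < n" "L \<le> m" "t \<le> n"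
  shows "RLC_point n m L t \<le> real m * (real n - real t) / real n"
proof -
  have "RLC_point n m L t \<le> real (m * ((n - 1) choose t)) / real (n choose t)"
    by (rule point_le[OF chi_uncoded[OF _ assms(1)] assms(2)])
  also have "\<dots> = real m * (real n - real t) / real n"
  proof -
    have id: "(n - t) * (n choose t) = n * ((n - 1) choose t)" by (rule binomial_absorb_comp)
    hence "real (n - t) * real (n choose t) = real n * real ((n - 1) choose t)"
      by (metis of_nat_mult)
    moreover have "real (n - t) = real n - real t" using assms(3) by simp
    moreover have "real (n choose t) > 0" using assms(3) by simp
    ultimately show ?thesis using assms(1) by (simp add: field_simps)
  qed
  finally show ?thesis .
qed

lemma P_man:
  assumes "L \<le> m" "t \<le> n"
  shows "RLC_point n m L t \<le> real L * (real n - real t) / (real t + 1)"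
proof -
  have "RLC_point n m L t \<le> real (L * (n choose Suc t)) / real (n choose t)"
    by (rule point_le[OF chi_MAN assms(1)])
  also have "\<dots> = real L * (real n - real t) / (real t + 1)"
  proof -
    have E0: "Suc t * (n choose Suc t) = (n - t) * (n choose t)"
      using binomial_absorption[of t n] binomial_absorb_comp[of n t] by simp
    have E: "real (n choose Suc t) * (real t + 1) = (real n - real t) * real (n choose t)"
      using arg_cong[OF E0, of real] assms(2) by (simp add: of_nat_diff algebra_simps)
    have Cpos: "real (n choose t) > 0" using assms(2) by simp
    have "real L * real (n choose Suc t) * (real t + 1) = real L * (real n - real t) * real (n choose t)"
      using E by (simp add: mult.assoc)
    thus ?thesis using Cpos by (simp add: frac_eq_eq)
  qed
  finally show ?thesis .
qed




lemma RLC_interp: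
  assumes n: "0 < n" and m: "0 < m" and M0: "0 \<le> M" and Mm: "M < real m"
  defines "x \<equiv> real n * M / real m"
  defines "t0 \<equiv> nat \<lfloor>x\<rfloor>"
  defines "\<theta> \<equiv> x - real t0"
  shows "t0 < n \<and> 0 \<le> \<theta> \<and> \<theta> < 1 \<and>
    RLC n m L M \<le> (1 - \<theta>) * RLC_point n m L t0 + \<theta> * RLC_point n m L (Suc t0)"
proof -
  have x0: "0 \<le> x" unfolding x_def using M0 by simp
  have xn: "x < real n" unfolding x_def using Mm m n by (simp add: field_simps)
  have t0x: "real t0 = of_int \<lfloor>x\<rfloor>" unfolding t0_def using x0 by simp
  have th0: "0 \<le> \<theta>" and th1: "\<theta> < 1" unfolding \<theta>_def t0x by linarith+
  have "real t0 \<le> x" using t0x of_int_floor_le[of x] by linarith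
  hence "real t0 < real n" using xn by linarith
  hence t0n: "t0 < n" by simp
  let ?P = "RLC_point n m L"
  have "RLC n m L M \<le> (1 - \<theta>) * ?P t0 + \<theta> * ?P (Suc t0)"
  proof (cases "\<exists>t\<le>n. M = real t * real m / real n")
    case True
    then obtain t where t: "t \<le> n" "M = real t * real m / real n" by blast
    have uniq: "(THE t. t \<le> n \<and> M = real t * real m / real n) = t"
    proof (rule the_equality)
      show "t \<le> n \<and> M = real t * real m / real n" using t by simp
      fix t' assume "t' \<le> n \<and> M = real t' * real m / real n"
      hence "real t' * real m / real n = real t * real m / real n" using t(2) by linarith
      thus "t' = t" using m n by (auto simp: field_simps)
    qed
    have "x = real t" unfolding x_def t(2) using m n by (simp add: field_simps)
    hence "t0 = t" unfolding t0_def by simp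
    hence "\<theta> = 0" unfolding \<theta>_def using \<open>x = real t\<close> by simp
    show ?thesis unfolding RLC_def using True uniq \<open>t0 = t\<close> \<open>\<theta> = 0\<close> by simp
  next
    case False
    define w where "w t = (if t = t0 then 1 - \<theta> else 0) + (if t = Suc t0 then \<theta> else 0)" for t
    have s1: "(\<Sum>t\<le>n. w t * g t) = (1 - \<theta>) * g t0 + \<theta> * g (Suc t0)" for g :: "nat \<Rightarrow> real"
    proof -
      have "(\<Sum>t\<le>n. w t * g t) = (\<Sum>t\<le>n. (if t = t0 then (1 - \<theta>) * g t else 0)) + (\<Sum>t\<le>n. (if t = Suc t0 then \<theta> * g t else 0))"
      proof -
        have pt: "w t * g t = (if t = t0 then (1 - \<theta>) * g t else 0) + (if t = Suc t0 then \<theta> * g t else 0)" for t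
          unfolding w_def by (simp add: distrib_right)
        show ?thesis by (simp only: pt sum.distrib)
      qed
      also have "\<dots> = (1 - \<theta>) * g t0 + \<theta> * g (Suc t0)" using t0n by (simp add: sum.delta)
      finally show ?thesis .
    qed
    have mem: "(1 - \<theta>) * ?P t0 + \<theta> * ?P (Suc t0) \<in> {(\<Sum>t\<le>n. w t * ?P t) | w.
                  (\<forall>t\<le>n. 0 \<le> w t) \<and> (\<Sum>t\<le>n. w t) = 1 \<and>
                  (\<Sum>t\<le>n. w t * (real t * real m / real n)) = M}"
    proof (rule CollectI, rule exI[of _ w], intro conjI)
      show "(1 - \<theta>) * ?P t0 + \<theta> * ?P (Suc t0) = (\<Sum>t\<le>n. w t * ?P t)" by (rule s1[symmetric])
      show "\<forall>t\<le>n. 0 \<le> w t" unfolding w_def using th0 th1 by auto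
      show "(\<Sum>t\<le>n. w t) = 1" using s1[of "\<lambda>_. 1"] by simp
      have "(\<Sum>t\<le>n. w t * (real t * real m / real n)) = (1 - \<theta>) * (real t0 * real m / real n) + \<theta> * (real (Suc t0) * real m / real n)"
        by (rule s1)
      also have "\<dots> = (real t0 + \<theta>) * real m / real n" using n by (simp add: field_simps)
      also have "\<dots> = M" unfolding \<theta>_def x_def using n m by (simp add: field_simps)
      finally show "(\<Sum>t\<le>n. w t * (real t * real m / real n)) = M" .
    qed
    have bdd: "bdd_below {(\<Sum>t\<le>n. w t * ?P t) | w.
                  (\<forall>t\<le>n. 0 \<le> w t) \<and> (\<Sum>t\<le>n. w t) = 1 \<and>
                  (\<Sum>t\<le>n. w t * (real t * real m / real n)) = M}"
      by (rule bdd_belowI[of _ 0]) (auto intro!: sum_nonneg mult_nonneg_nonneg P_nonneg)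
    show ?thesis unfolding RLC_def if_not_P[OF False] by (rule cInf_lower[OF mem bdd])
  qed
  thus ?thesis using t0n th0 th1 by simp
qed




lemma U_bounds:
  assumes n: "0 < n" and m: "0 < m" and M0: "0 \<le> M" and Mm: "M < real m" and Lm: "L \<le> m"
  shows "RLC n m L M \<le> real m - M" and "RLC n m L M \<le> real L * real n"
    and "0 < M \<Longrightarrow> RLC n m L M * M \<le> real L * (real m - M)"
proof -
  define x where "x = real n * M / real m"
  define t0 where "t0 = nat \<lfloor>x\<rfloor>"
  define \<theta> where "\<theta> = x - real t0"
  have I: "t0 < n \<and> 0 \<le> \<theta> \<and> \<theta> < 1 \<and>
    RLC n m L M \<le> (1 - \<theta>) * RLC_point n m L t0 + \<theta> * RLC_point n m L (Suc t0)"
    using RLC_interp[OF n m M0 Mm] unfolding x_def t0_def \<theta>_def by blast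
  hence t0n: "t0 < n" and th0: "0 \<le> \<theta>" and th1: "\<theta> < 1" and U: "RLC n m L M \<le> (1 - \<theta>) * RLC_point n m L t0 + \<theta> * RLC_point n m L (Suc t0)"
    by auto
  have x0: "0 \<le> x" unfolding x_def using M0 by simp
  have xn0: "x \<le> real n" unfolding x_def using Mm n m by (simp add: field_simps)
  have xt: "x = real t0 + \<theta>" unfolding \<theta>_def by simp
  have xeq: "real m * x = real n * M" unfolding x_def using m by simp
  have A1: "RLC_point n m L t0 \<le> real m * (real n - real t0) / real n" by (rule P_unc) (use n Lm t0n in auto)
  have A2: "RLC_point n m L (Suc t0) \<le> real m * (real n - real (Suc t0)) / real n" by (rule P_unc) (use n Lm t0n in auto)
  have B1: "RLC_point n m L t0 \<le> real L * (real n - real t0) / (real t0 + 1)" by (rule P_man) (use Lm t0n in auto)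
  have B2: "RLC_point n m L (Suc t0) \<le> real L * (real n - real (Suc t0)) / (real (Suc t0) + 1)" by (rule P_man) (use Lm t0n in auto)
  have "RLC n m L M \<le> (1 - \<theta>) * (real m * (real n - real t0) / real n) + \<theta> * (real m * (real n - real (Suc t0)) / real n)"
  proof -
    have "(1 - \<theta>) * RLC_point n m L t0 \<le> (1 - \<theta>) * (real m * (real n - real t0) / real n)"
      using A1 th1 by (intro mult_left_mono) auto
    moreover have "\<theta> * RLC_point n m L (Suc t0) \<le> \<theta> * (real m * (real n - real (Suc t0)) / real n)"
      using A2 th0 by (intro mult_left_mono) auto
    ultimately show ?thesis using U by linarith
  qed
  also have "\<dots> = real m * (real n - x) / real n" unfolding xt using n by (simp add: field_simps)
  also have "\<dots> = real m - M" using xeq n by (simp add: field_simps)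
  finally show F1: "RLC n m L M \<le> real m - M" .
  have le2: "real L * (real n - real (Suc t0)) / (real (Suc t0) + 1) \<le> real L * (real n - real (Suc t0)) / (real t0 + 1)"
    using t0n by (intro divide_left_mono mult_nonneg_nonneg) auto
  have "RLC n m L M \<le> (1 - \<theta>) * (real L * (real n - real t0) / (real t0 + 1)) + \<theta> * (real L * (real n - real (Suc t0)) / (real t0 + 1))"
  proof -
    have "(1 - \<theta>) * RLC_point n m L t0 \<le> (1 - \<theta>) * (real L * (real n - real t0) / (real t0 + 1))"
      using B1 th1 by (intro mult_left_mono) auto
    moreover have "\<theta> * RLC_point n m L (Suc t0) \<le> \<theta> * (real L * (real n - real (Suc t0)) / (real t0 + 1))"
      using B2 le2 th0 by (intro mult_left_mono) auto
    ultimately show ?thesis using U by linarith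
  qed
  also have "\<dots> = ((1 - \<theta>) * (real L * (real n - real t0)) + \<theta> * (real L * (real n - real (Suc t0)))) / (real t0 + 1)"
    by (simp add: add_divide_distrib)
  also have "\<dots> = real L * (real n - x) / (real t0 + 1)" unfolding xt by (simp add: algebra_simps)
  finally have F2: "RLC n m L M \<le> real L * (real n - x) / (real t0 + 1)" .
  have nn0: "0 \<le> real L * (real n - x)" using xn0 by simp
  have "real L * (real n - x) / (real t0 + 1) \<le> real L * (real n - x) / 1"
    by (rule divide_left_mono[OF _ nn0]) auto
  also have "\<dots> \<le> real L * real n" using x0 by (simp add: mult_left_mono)
  finally show "RLC n m L M \<le> real L * real n" using F2 by linarith
  assume Mp: "0 < M"
  have xp: "0 < x" unfolding x_def using Mp n m by simp
  have xn: "x \<le> real n" unfolding x_def using Mm n m by (simp add: field_simps)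
  have xle: "x \<le> real t0 + 1" using xt th1 by linarith
  have nn: "0 \<le> real L * (real n - x)" using xn by simp
  have "real L * (real n - x) / (real t0 + 1) \<le> real L * (real n - x) / x"
    by (rule divide_left_mono[OF xle nn]) (use xp in simp)
  hence "RLC n m L M \<le> real L * (real n - x) / x" using F2 by linarith
  hence "RLC n m L M * x \<le> real L * (real n - x)" using xp by (simp add: pos_le_divide_eq)
  hence le3: "(RLC n m L M * x) * real m \<le> (real L * (real n - x)) * real m" by (rule mult_right_mono) simp
  have "real n * (RLC n m L M * M) = (RLC n m L M * x) * real m" using xeq by (simp add: algebra_simps)
  also have "\<dots> \<le> (real L * (real n - x)) * real m" by (rule le3)
  also have "(real L * (real n - x)) * real m = real L * (real n * real m - real m * x)" by (simp add: algebra_simps)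
  also have "\<dots> = real n * (real L * (real m - M))" unfolding xeq by (simp add: algebra_simps)
  finally have "real n * (RLC n m L M * M) \<le> real n * (real L * (real m - M))" .
  thus "RLC n m L M * M \<le> real L * (real m - M)" using n by simp
qed




theorem theorem6:
  fixes n m L :: nat and M :: real
  assumes "0 < n" and "0 < m" and "0 < L" and "L \<le> m"
    and "0 \<le> M" and "M < real m"
  shows "RLC n m L M / Rlb n m L M \<le> 18"
proof -
  note n = assms(1) and m = assms(2) and L0 = assms(3) and Lm = assms(4) and M0 = assms(5) and Mm = assms(6)
  define U where "U = RLC n m L M"
  define R where "R = Rlb n m L M"
  define N where "N = m div L"
  define c where "c = \<lceil>real m / real L\<rceil>"
  have U1: "U \<le> real m - M" and U2: "U \<le> real L * real n" and U3: "0 < M \<Longrightarrow> U * M \<le> real L * (real m - M)"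
    unfolding U_def using U_bounds[OF n m M0 Mm Lm] by auto
  have LNm: "L * N \<le> m" unfolding N_def by (simp add: times_div_less_eq_dividend)
  have mLN: "m < L * (N + 1)"
  proof -
    have "m = L * N + m mod L" unfolding N_def by simp
    moreover have "m mod L < L" using L0 by simp
    moreover have "L * (N + 1) = L * N + L" by simp
    ultimately show ?thesis by linarith
  qed
  have "real (L * N) \<le> real m" using LNm by (simp only: of_nat_le_iff)
  hence rLNm: "real L * real N \<le> real m" by simp
  have "real m < real (L * (N + 1))" using mLN by (simp only: of_nat_less_iff)
  hence rmLN: "real m < real L * (real N + 1)" by (simp add: algebra_simps)
  have cge: "real m / real L \<le> real_of_int c" unfolding c_def by simp
  have clt: "real_of_int c < real m / real L + 1" unfolding c_def using ceiling_correct[of "real m / real L"] by linarith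
  have "0 < real m / real L" using m L0 by simp
  hence cpos: "0 < real_of_int c" using cge by linarith
  have cN: "c \<le> int N + 1"
  proof -
    have "real m / real L \<le> real N + 1" using rmLN L0 by (simp add: field_simps)
    thus ?thesis unfolding c_def by (simp add: ceiling_le_iff)
  qed
  have Lc: "real L * real_of_int c < real m + real L" using clt L0 by (simp add: field_simps)
  have Rb1: "(real m - M) / real_of_int c \<le> R" unfolding R_def Rlb_def c_def by simp
  have Rb2: "real L * real s - real s * M / real (N div s) \<le> R" if s: "s \<in> {1..min N n}" for s
  proof -
    have "real L * real s - real s * M / real (N div s) \<in>
       (\<lambda>s. real L * real s - real s * M / real ((m div L) div s)) ` {1..min (m div L) n}"
      using s unfolding N_def by blast
    hence "real L * real s - real s * M / real (N div s) \<le> Max ((\<lambda>s. real L * real s - real s * M / real ((m div L) div s)) ` {1..min (m div L) n})"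
      by (intro Max_ge) auto
    thus ?thesis unfolding R_def Rlb_def by linarith
  qed
  have b1pos: "0 < (real m - M) / real_of_int c" using cpos Mm by simp
  have Rpos: "0 < R" using b1pos Rb1 by linarith
  have main: "U \<le> 18 * R"
  proof (cases "c \<le> 18")
    case True
    have "U \<le> real_of_int c * ((real m - M) / real_of_int c)" using U1 cpos by simp
    also have "\<dots> \<le> 18 * ((real m - M) / real_of_int c)"
      using True b1pos by (intro mult_right_mono) auto
    also have "\<dots> \<le> 18 * R" using Rb1 by linarith
    finally show ?thesis .
  next
    case False
    hence N18: "18 \<le> N" using cN by linarith
    hence rN18: "18 \<le> real N" by simp
    have "18 * L \<le> N * L" using N18 by simp
    moreover have "N * L \<le> m" by (metis LNm mult.commute)
    ultimately have "18 * L \<le> m" by linarith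
    hence "real (18 * L) \<le> real m" by (simp only: of_nat_le_iff)
    hence L18: "18 * real L \<le> real m" by simp
    show ?thesis
    proof (cases "real m \<le> 17 * M")
      case True
      have Mp: "0 < M" using True m by simp
      have key: "real L * real_of_int c \<le> 18 * M" using Lc L18 True by linarith
      have h1: "U * M \<le> real L * (real m - M)" by (rule U3[OF Mp])
      have "(U * real_of_int c) * M = (U * M) * real_of_int c" by (simp add: ac_simps)
      also have "\<dots> \<le> (real L * (real m - M)) * real_of_int c" using h1 cpos by (intro mult_right_mono) auto
      also have "\<dots> = (real L * real_of_int c) * (real m - M)" by (simp add: ac_simps)
      also have "\<dots> \<le> (18 * M) * (real m - M)" using key Mm by (intro mult_right_mono) auto
      also have "\<dots> = (18 * (real m - M)) * M" by (simp add: ac_simps)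
      finally have "(U * real_of_int c) * M \<le> (18 * (real m - M)) * M" .
      hence "U * real_of_int c \<le> 18 * (real m - M)" using Mp by (simp add: mult_le_cancel_right_pos)
      hence "U \<le> 18 * (real m - M) / real_of_int c" using cpos by (simp add: pos_le_divide_eq)
      hence "U \<le> 18 * ((real m - M) / real_of_int c)" by simp
      thus ?thesis using Rb1 by linarith
    next
      case False
      hence m17: "17 * M < real m" by simp
      have hN1: "2 * (N div 2) \<le> N" and hN2: "N \<le> 2 * (N div 2) + 1"
        using div_mult_mod_eq[of N 2] mod_less_divisor[of 2 N] by linarith+
      define k where "k = (if M = 0 then n else nat \<lfloor>real m / (4 * M)\<rfloor>)"
      define s where "s = min n (min (N div 2) k)"
      have k1: "1 \<le> k"
      proof (cases "M = 0")
        case True thus ?thesis unfolding k_def using n by simp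
      next
        case False
        hence Mp: "0 < M" using M0 by simp
        have "1 \<le> real m / (4 * M)" using Mp m17 by (simp add: field_simps)
        hence f1: "1 \<le> \<lfloor>real m / (4 * M)\<rfloor>" by simp
        have "1 \<le> nat \<lfloor>real m / (4 * M)\<rfloor>" using nat_mono[OF f1] by simp
        thus ?thesis unfolding k_def using False by simp
      qed
      have "1 \<le> N div 2" using N18 hN2 by linarith
      hence s1: "1 \<le> s" unfolding s_def using k1 n by simp
      hence s0: "0 < s" by simp
      have "s \<le> N div 2" unfolding s_def by simp
      hence sN2: "2 * s \<le> N" using hN1 by linarith
      have sn: "s \<le> n" unfolding s_def by simp
      have sM: "4 * (real s * M) \<le> real m"
      proof (cases "M = 0")
        case True thus ?thesis by simp
      next
        case False
        hence Mp: "0 < M" using M0 by simp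
        have fl0: "0 \<le> \<lfloor>real m / (4 * M)\<rfloor>" using Mp by simp
        have "real k = of_int \<lfloor>real m / (4 * M)\<rfloor>" unfolding k_def using False fl0 by simp
        hence "real k \<le> real m / (4 * M)" using of_int_floor_le[of "real m / (4 * M)"] by linarith
        moreover have "real s \<le> real k" unfolding s_def by simp
        ultimately have "real s \<le> real m / (4 * M)" by linarith
        hence "real s * (4 * M) \<le> real m" using Mp by (simp add: pos_le_divide_eq)
        thus ?thesis by (simp add: ac_simps)
      qed
      define q where "q = N div s"
      have q2: "2 \<le> q"
      proof -
        have "(2 * s) div s \<le> N div s" by (rule div_le_mono[OF sN2])
        thus ?thesis unfolding q_def using s0 by simp
      qed
      have Nq: "N + 1 \<le> 2 * s * q"
      proof -
        have "N = q * s + N mod s" unfolding q_def by simp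
        moreover have "N mod s < s" using s0 by simp
        moreover have "1 * s \<le> q * s" using q2 by (intro mult_le_mono1) simp
        moreover have "2 * s * q = q * s + q * s" by (simp add: algebra_simps)
        ultimately show ?thesis by linarith
      qed
      have "real (N + 1) \<le> real (2 * s * q)" using Nq by (simp only: of_nat_le_iff)
      hence rNq: "real N + 1 \<le> 2 * real s * real q" by simp
      have mq: "real m \<le> 2 * (real L * real s * real q)"
      proof -
        have "real L * (real N + 1) \<le> real L * (2 * real s * real q)" using rNq by (intro mult_left_mono) auto
        moreover have "real L * (2 * real s * real q) = 2 * (real L * real s * real q)" by (simp add: ac_simps)
        ultimately show ?thesis using rmLN by linarith
      qed
      have qpos: "0 < real q" using q2 by simp
      have hsq: "2 * (real s * M) \<le> real L * real s * real q" using sM mq by linarith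
      have "real s * M / real q \<le> (real L * real s * real q / 2) / real q"
        using qpos hsq by (intro divide_right_mono) auto
      also have "(real L * real s * real q / 2) / real q = real L * real s / 2" using qpos by simp
      finally have "real s * M / real q \<le> real L * real s / 2" .
      hence ge: "real L * real s / 2 \<le> real L * real s - real s * M / real (N div s)" unfolding q_def by linarith
      have mem: "s \<in> {1..min N n}" using s1 sN2 sn by auto
      have Rs: "real L * real s / 2 \<le> R" using Rb2[OF mem] ge by linarith
      have "U \<le> 9 * (real L * real s)"
      proof -
        have cs: "s = n \<or> s = N div 2 \<or> (s = k \<and> 0 < M)"
          unfolding s_def k_def using M0 by (auto simp: min_def split: if_splits)
        moreover
        { assume sn': "s = n"
          have nn: "0 \<le> real L * real n" by simp
          have "U \<le> 9 * (real L * real n)" using U2 nn by linarith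
          hence ?thesis using sn' by simp }
        moreover
        { assume sh: "s = N div 2"
          have "N + 1 \<le> 9 * s" unfolding sh using N18 hN2 by linarith
          hence "real (N + 1) \<le> real (9 * s)" by (simp only: of_nat_le_iff)
          hence "real N + 1 \<le> 9 * real s" by simp
          hence "real L * (real N + 1) \<le> real L * (9 * real s)" by (intro mult_left_mono) auto
          moreover have "real L * (9 * real s) = 9 * (real L * real s)" by (simp add: ac_simps)
          ultimately have ?thesis using U1 rmLN M0 by linarith }
        moreover
        { assume sk: "s = k \<and> 0 < M"
          hence Mp: "0 < M" and sk': "s = nat \<lfloor>real m / (4 * M)\<rfloor>" unfolding k_def by auto
          have y0: "0 \<le> \<lfloor>real m / (4 * M)\<rfloor>" using Mp by simp
          hence "real s = of_int \<lfloor>real m / (4 * M)\<rfloor>" unfolding sk' by simp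
          hence "real m / (4 * M) < real s + 1" using floor_correct[of "real m / (4 * M)"] by linarith
          hence "real m < (real s + 1) * (4 * M)" using Mp by (simp add: divide_less_eq)
          moreover have "(real s + 1) * (4 * M) = 4 * (real s * M) + 4 * M" by (simp add: algebra_simps)
          moreover have "1 * M \<le> real s * M" using s1 Mp by (intro mult_right_mono) auto
          ultimately have mm: "real m \<le> 9 * (real s * M)" using Mp by linarith
          have "real L * real m \<le> real L * (9 * (real s * M))" using mm by (intro mult_left_mono) auto
          moreover have "real L * (real m - M) \<le> real L * real m" using M0 by (intro mult_left_mono) auto
          moreover have "real L * (9 * (real s * M)) = (9 * (real L * real s)) * M" by (simp add: ac_simps)
          ultimately have "U * M \<le> (9 * (real L * real s)) * M" using U3[OF Mp] by linarith
          hence ?thesis using Mp by (simp add: mult_le_cancel_right_pos) }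
        ultimately show ?thesis by blast
      qed
      thus ?thesis using Rs by linarith
    qed
  qed
  have "U / R \<le> 18" using main Rpos by (simp add: pos_divide_le_eq mult.commute)
  thus ?thesis unfolding U_def R_def .
qed


end
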